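(* For every value profile $(v_1,v_2)\in\mathbb R^2_{\ge0}$, the allocation $x=x(v_1,v_2)$ of the two-bidder auction defined below satisfies $\bar W(x)\ge\frac34\bar W^*$.
   Context: One divisible good, two bidders with values per unit $v_1,v_2\ge0$ and known budgets $B_1=B_2=1$. The allocation $x(v_1,v_2)=(x_1,x_2)$ is symmetric ($x(v_1,v_2)$ is obtained from $x(v_2,v_1)$ by swapping coordinates) and for $v_1\ge v_2$ is given by the first applicable rule: if $v_1=v_2$, $x=(\frac12,\frac12)$; else if $v_2\le\frac13$, $x=(1,0)$; else if $\frac13\le v_2\le1$, $x=(\frac14+\frac1{4v_2},\frac34-\frac1{4v_2})$; else ($v_2\ge1$) $x=(\frac12,\frac12)$. Liquid welfare: $\bar W(x)=\sum_i\min\{v_ix_i,B_i\}$; $\bar W^*=\max\{\bar W(x):x\ge0,x_1+x_2=1\}$. *)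

theory Defs
  imports Complex_Main
begin

definition budget :: real where "budget = 1"

definition alloc_ord :: "real \<Rightarrow> real \<Rightarrow> real \<times> real" where
  "alloc_ord v1 v2 =
     (if v1 = v2 then (1/2, 1/2)
      else if v2 \<le> 1/3 then (1, 0)
      else if v2 \<le> 1 then (1/4 + 1/(4*v2), 3/4 - 1/(4*v2))
      else (1/2, 1/2))"

definition alloc :: "real \<Rightarrow> real \<Rightarrow> real \<times> real" where
  "alloc v1 v2 = (if v1 \<ge> v2 then alloc_ord v1 v2
                  else (case alloc_ord v2 v1 of (a, b) \<Rightarrow> (b, a)))"

definition liquid_welfare :: "real \<Rightarrow> real \<Rightarrow> real \<times> real \<Rightarrow> real" where
  "liquid_welfare v1 v2 x = min (v1 * fst x) budget + min (v2 * snd x) budget"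

text \<open>Optimal liquid welfare: supremum (attained, hence the maximum) over feasible allocations x >= 0, x1 + x2 = 1.\<close>
definition opt_liquid_welfare :: "real \<Rightarrow> real \<Rightarrow> real" where
  "opt_liquid_welfare v1 v2 =
     Sup (liquid_welfare v1 v2 ` {x. fst x \<ge> 0 \<and> snd x \<ge> 0 \<and> fst x + snd x = 1})"

end

theory Submission imports Defs begin

lemma lin1: fixes A B w C D :: real
  assumes "B \<le> w" "A \<le> 1" "C = 1" "D = 3*w/4 - 1/4" shows "3/4*(A+B) \<le> C + D" using assms by (simp add: field_simps)
lemma lin2: fixes X Y :: real assumes "X \<le> Y" "0 \<le> Y" shows "3/4*X \<le> Y" using assms by linarith
lemma lin3: fixes a b v1 v2 :: real
  assumes "a + b \<le> v1" "b \<le> v2" "v2 \<le> 1/3" "a \<ge> 0" "b \<ge> 0"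
  shows "3/4*(min a 1 + min b 1) \<le> min v1 1"
  using assms by (simp add: min_def)

lemma lin4: fixes a b v1 v2 :: real
  assumes "a + b \<le> v1" "1 < v2" "v2 \<le> v1"
  shows "3/4*(min a 1 + min b 1) \<le> min (v1/2) 1 + min (v2/2) 1"
  using assms by (simp add: min_def)

lemma lin5: fixes P Q q R S U :: real
  assumes "Q \<le> q" "P + q \<le> R" "3*R \<le> 4*(S + U - 1/4)"
  shows "3/4*(P+Q) \<le> S + (U - 1/4)"
  using assms by argo

lemma mid: fixes v1 v2 y1 y2 t :: real
  assumes "v1 > v2" "1/3 < v2" "v2 \<le> 1" "y1 \<ge> 0" "y2 \<ge> 0" "y1+y2=1" "t*v2 = 1"
  shows "3/4*(min (v1*y1) 1 + min (v2*y2) 1) \<le> min (v1*(1/4+t/4)) 1 + min (v2*(3/4-t/4)) 1"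
proof -
  have b: "v2*(3/4-t/4) = 3*v2/4 - 1/4" using assms by (simp add: algebra_simps)
  have t: "t = 1/v2" using assms by (simp add: field_simps)
  have a: "v1*(1/4+t/4) = v1/4 + v1/(4*v2)" unfolding t by (simp add: divide_simps algebra_simps)
  have key: "4*v1*v2 \<le> v1^2*(1+v2) + 3*v2^2"
  proof -
    have "0 \<le> (2*v1-3*v2)^2" by simp
    moreover have "v1^2*(4/3) \<le> v1^2*(1+v2)" using assms by (intro mult_left_mono) auto
    ultimately show ?thesis by (simp add: power2_eq_square algebra_simps)
  qed
  show ?thesis
  proof (cases "v1/4 + v1/(4*v2) \<ge> 1")
    case True
    have "min (v2*y2) 1 \<le> v2" proof - have "v2*y2 \<le> v2" using assms mult_left_le[of y2 v2] by simp then show ?thesis by linarith qed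
    moreover have "min (v1*y1) 1 \<le> 1" by simp
    moreover have "min (v1 * (1/4 + t/4)) 1 = 1" using True a by simp
    moreover have "min (v2 * (3/4 - t/4)) 1 = 3*v2/4 - 1/4" using b assms by simp
    ultimately show ?thesis
      using lin1[where A="min (v1*y1) 1" and B="min (v2*y2) 1" and w=v2 and C="min (v1 * (1/4 + t/4)) 1" and D="min (v2 * (3/4 - t/4)) 1"] by blast
  next
    case False
    have "v2*y1+v2*y2 = v2" using assms by (metis distrib_left mult_1_right)
    then have q: "v2*y2 = v2 - v2*y1" by linarith
    have m: "min (v1*y1) 1 + v2*y2 \<le> v2 + 1 - v2/v1"
    proof (cases "v1*y1 \<le> 1")
      case True
      have "v2*y1 = (v1*y1)*(v2/v1)" using assms by (simp add: field_simps)
      moreover have "(v1*y1)*(1 - v2/v1) \<le> 1 * (1 - v2/v1)"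
        using True assms by (intro mult_right_mono) (auto simp: field_simps)
      ultimately show ?thesis using True q by (simp add: algebra_simps)
    next
      case c: False
      have "y1 \<ge> 1/v1" using c assms by (simp add: field_simps)
      hence "v2*y1 \<ge> v2/v1" using assms using mult_left_mono[of "1/v1" y1 v2] by simp
      then show ?thesis using c q by linarith
    qed
    have k2: "3*(v2 + 1 - v2/v1) \<le> 4*(v1/4 + v1/(4*v2) + 3*v2/4 - 1/4)"
    proof -
      have pos: "v1*v2 > 0" using assms by simp
      have "3*(v2 + 1 - v2/v1) * (v1*v2) = 3*v1*v2^2 + 3*v1*v2 - 3*v2^2" using assms by (simp add: field_simps power2_eq_square)
      moreover have "4*(v1/4 + v1/(4*v2) + 3*v2/4 - 1/4)*(v1*v2) = v1^2*v2 + v1^2 + 3*v1*v2^2 - v1*v2"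
        using assms by (simp add: field_simps power2_eq_square)
      ultimately have "3*(v2 + 1 - v2/v1) * (v1*v2) \<le> 4*(v1/4 + v1/(4*v2) + 3*v2/4 - 1/4)*(v1*v2)"
        using key by (simp add: algebra_simps)
      then show ?thesis using pos by (rule mult_right_le_imp_le)
    qed
    have "min (v2*y2) 1 \<le> v2*y2" by simp
    moreover have "min (v1*(1/4+t/4)) 1 = v1/4 + v1/(4*v2)" using False a by simp
    moreover have "min (v2*(3/4-t/4)) 1 = 3*v2/4 - 1/4" using b assms by simp
    ultimately show ?thesis using lin5[OF _ m k2] by presburger
  qed
qed

lemma ord_bound: fixes v1 v2 y1 y2 :: real
  assumes "v1 \<ge> v2" "v2 \<ge> 0" "y1 \<ge> 0" "y2 \<ge> 0" "y1+y2=1"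
  shows "3/4*(min (v1*y1) 1 + min (v2*y2) 1) \<le> liquid_welfare v1 v2 (alloc_ord v1 v2)"
proof -
  have s: "v2*y2 \<le> v1*y2" using assms by (simp add: mult_right_mono)
  have s1: "v1*y1 \<le> v1" "v2*y2 \<le> v2" using assms by (simp_all add: mult_left_le)
  have sum: "v1*y1+v2*y2 \<le> v1" proof -
    have "v1*y1+v1*y2 = v1" using assms by (metis distrib_left mult_1_right)
    then show ?thesis using s by linarith
  qed
  show ?thesis
  proof (cases "v1 = v2")
    case True
    have "liquid_welfare v1 v2 (alloc_ord v1 v2) = min (v1/2) 1 + min (v2/2) 1"
      using True unfolding liquid_welfare_def alloc_ord_def budget_def by simp
    moreover have "min (v1*y1) 1 + min (v2*y2) 1 \<le> min v1 2" using sum by linarith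
    moreover have "min (v1/2) 1 + min (v2/2) 1 = min v1 2" using True by (simp add: min_def)
    moreover have "min v1 2 \<ge> 0" using assms by simp
    ultimately show ?thesis using lin2[of "min (v1*y1) 1 + min (v2*y2) 1" "min v1 2"] by simp
  next
    case ne: False
    show ?thesis
    proof (cases "v2 \<le> 1/3")
      case True
      have "liquid_welfare v1 v2 (alloc_ord v1 v2) = min v1 1"
        using True ne unfolding liquid_welfare_def alloc_ord_def budget_def by simp
      moreover have "3/4*(min (v1*y1) 1 + min (v2*y2) 1) \<le> min v1 1"
        using lin3[of "v1*y1" "v2*y2" v1 v2] True sum s1 assms by simp
      ultimately show ?thesis by simp
    next
      case c2: False
      show ?thesis
      proof (cases "v2 \<le> 1")
        case True
        have "3/4*(min (v1*y1) 1 + min (v2*y2) 1) \<le> min (v1*(1/4+(1/v2)/4)) 1 + min (v2*(3/4-(1/v2)/4)) 1"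
          using mid[of v2 v1 y1 y2 "1/v2"] ne assms c2 True by auto
        moreover have "alloc_ord v1 v2 = (1/4+(1/v2)/4, 3/4-(1/v2)/4)"
          using ne c2 True unfolding alloc_ord_def by simp
        ultimately show ?thesis unfolding liquid_welfare_def budget_def by simp
      next
        case False
        have "liquid_welfare v1 v2 (alloc_ord v1 v2) = min (v1/2) 1 + min (v2/2) 1"
          using False ne c2 unfolding liquid_welfare_def alloc_ord_def budget_def by simp
        then show ?thesis using lin4[of "v1*y1" "v2*y2" v1 v2] sum False assms by simp
      qed
    qed
  qed
qed

theorem mainTheorem12:
  fixes v1 v2 :: real
  assumes "v1 \<ge> 0" and "v2 \<ge> 0"
  shows "liquid_welfare v1 v2 (alloc v1 v2) \<ge> 3/4 * opt_liquid_welfare v1 v2"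
proof -
  let ?S = "liquid_welfare v1 v2 ` {x. fst x \<ge> 0 \<and> snd x \<ge> 0 \<and> fst x + snd x = 1}"
  have "liquid_welfare v1 v2 (1,0) \<in> ?S" by (rule imageI) simp
  then have ne: "?S \<noteq> {}" by blast
  have bnd: "\<And>y. fst y \<ge> 0 \<Longrightarrow> snd y \<ge> 0 \<Longrightarrow> fst y + snd y = 1 \<Longrightarrow>
     3/4 * liquid_welfare v1 v2 y \<le> liquid_welfare v1 v2 (alloc v1 v2)"
  proof -
    fix y :: "real \<times> real"
    assume y: "fst y \<ge> 0" "snd y \<ge> 0" "fst y + snd y = 1"
    show "3/4 * liquid_welfare v1 v2 y \<le> liquid_welfare v1 v2 (alloc v1 v2)"
    proof (cases "v1 \<ge> v2")
      case True
      then show ?thesis using ord_bound[of v2 v1 "fst y" "snd y"] y assms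
        unfolding alloc_def liquid_welfare_def budget_def by simp
    next
      case False
      have "3/4*(min (v2*snd y) 1 + min (v1*fst y) 1) \<le> liquid_welfare v2 v1 (alloc_ord v2 v1)"
        using ord_bound[of v1 v2 "snd y" "fst y"] y assms False by simp
      obtain a b where ab: "alloc_ord v2 v1 = (a,b)" by (cases "alloc_ord v2 v1")
      show ?thesis using False ab \<open>3/4*_ \<le> _\<close>
        unfolding alloc_def liquid_welfare_def budget_def by simp
    qed
  qed
  have "opt_liquid_welfare v1 v2 \<le> 4/3 * liquid_welfare v1 v2 (alloc v1 v2)"
    unfolding opt_liquid_welfare_def
    using bnd by (intro cSup_least[OF ne]) force
  then show ?thesis by simp
qed

end
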